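(* Let $\Gamma$ be a MaxSAT instance encoded with blocking variables $b_1,\dots,b_m$, with $\mathrm{cost}(\Gamma)=k$. Then there is a derivation in the cost-SPR calculus from $\Gamma$ of the unit clauses $b_{i_1},\dots,b_{i_k}$ for some $k$ distinct indices $i_1,\dots,i_k$ and of all unit clauses $\lnot b_j$ for $j\notin\{i_1,\dots,i_k\}$.
   Context: Literals, clauses, CNFs (multisets of clauses), $\mathrm{Var}(\Gamma)$. A substitution $\sigma$ maps each variable to $0$, $1$ or a literal, extended by $\sigma(\lnot x)=\lnot\sigma(x)$, $\sigma(0)=0$, $\sigma(1)=1$; $(\sigma\circ\tau)(x)=\sigma(\tau(x))$. A (partial) assignment has $\sigma(x)\in\{0,1,x\}$; its domain is $\sigma^{-1}(\{0,1\})$; total means all variables get Boolean values. $C{\upharpoonright}_\sigma$: apply $\sigma$ to each literal and simplify; $\sigma\models C$ if the result is $1$ or tautological; $\Gamma{\upharpoonright}_\sigma$ is the multiset of $C{\upharpoonright}_\sigma\neq1$ for $C\in\Gamma$. $\lnot C$ is the partial assignment falsifying all literals of $C$; $\tau\supseteq\rho$ means $\tau$ extends $\rho$. $\Gamma\vdash_1 C$ means unit propagation on $\Gamma{\upharpoonright}_{\lnot C}$ derives the empty clause; $\Gamma\vdash_1\Delta$ means $\Gamma\vdash_1 D$ for all $D\in\Delta$. A MaxSAT instance encoded with blocking variables is a CNF $\Gamma=H\cup\{C_1\lor b_1,\dots,C_m\lor b_m\}$ with distinct fresh variables $b_i$ (blocking variables). $\mathrm{cost}(\alpha)=\sum_i\alpha(b_i)$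 for total $\alpha$; $\mathrm{cost}(\Gamma)=\min\{\mathrm{cost}(\alpha):\alpha\models\Gamma\}$. A clause $C$ is cost-SR w.r.t. $\Gamma$ via $\sigma$ if (1) $\Gamma{\upharpoonright}_{\lnot C}\vdash_1(\Gamma\cup\{C\}){\upharpoonright}_\sigma$ and (2) $\mathrm{cost}(\tau\circ\sigma)\le\mathrm{cost}(\tau)$ for all total $\tau\supseteq\lnot C$. It is cost-SPR if such a $\sigma$ exists that is a partial assignment with the same domain as $\lnot C$. A derivation in the cost-SPR calculus from $\Gamma$ is a sequence $D_1,\dots,D_t$ where each $D_i$ is in $\Gamma$, or follows from earlier clauses by weakening or resolution, or is cost-SPR w.r.t. $\Gamma\cup\{D_1,\dots,D_{i-1}\}$ with $\mathrm{Var}(D_i)\subseteq\mathrm{Var}(\Gamma)$. *)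

theory Defs
  imports Main "HOL-Library.Multiset"
begin

datatype 'v lit = Pos 'v | Neg 'v

fun neg_lit :: "'v lit \<Rightarrow> 'v lit" where
  "neg_lit (Pos x) = Neg x"
| "neg_lit (Neg x) = Pos x"

fun lvar :: "'v lit \<Rightarrow> 'v" where
  "lvar (Pos x) = x"
| "lvar (Neg x) = x"

type_synonym 'v clause = "'v lit set"
type_synonym 'v cnf = "'v clause multiset"

definition vars :: "'v clause \<Rightarrow> 'v set" where
  "vars C = lvar ` C"

definition vars_cnf :: "'v cnf \<Rightarrow> 'v set" where
  "vars_cnf \<Gamma> = (\<Union>C\<in>set_mset \<Gamma>. vars C)"

definition tautological :: "'v clause \<Rightarrow> bool" where
  "tautological C \<longleftrightarrow> (\<exists>x. Pos x \<in> C \<and> Neg x \<in> C)"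

datatype 'v sval = Cst bool | Lt "'v lit"

type_synonym 'v subst = "'v \<Rightarrow> 'v sval"

fun neg_sval :: "'v sval \<Rightarrow> 'v sval" where
  "neg_sval (Cst b) = Cst (\<not> b)"
| "neg_sval (Lt l) = Lt (neg_lit l)"

fun slit :: "'v subst \<Rightarrow> 'v lit \<Rightarrow> 'v sval" where
  "slit \<sigma> (Pos x) = \<sigma> x"
| "slit \<sigma> (Neg x) = neg_sval (\<sigma> x)"

fun ssval :: "'v subst \<Rightarrow> 'v sval \<Rightarrow> 'v sval" where
  "ssval \<sigma> (Cst b) = Cst b"
| "ssval \<sigma> (Lt l) = slit \<sigma> l"

definition scomp :: "'v subst \<Rightarrow> 'v subst \<Rightarrow> 'v subst" where
  "scomp \<sigma> \<tau> = (\<lambda>x. ssval \<sigma> (\<tau> x))"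

definition is_pa :: "'v subst \<Rightarrow> bool" where
  "is_pa \<sigma> \<longleftrightarrow> (\<forall>x. \<sigma> x \<in> {Cst False, Cst True, Lt (Pos x)})"

definition sdom :: "'v subst \<Rightarrow> 'v set" where
  "sdom \<sigma> = {x. \<exists>b. \<sigma> x = Cst b}"

definition total :: "'v subst \<Rightarrow> bool" where
  "total \<sigma> \<longleftrightarrow> is_pa \<sigma> \<and> (\<forall>x. \<exists>b. \<sigma> x = Cst b)"

definition extends :: "'v subst \<Rightarrow> 'v subst \<Rightarrow> bool" where
  "extends \<tau> \<rho> \<longleftrightarrow> (\<forall>x b. \<rho> x = Cst b \<longrightarrow> \<tau> x = Cst b)"

text \<open>Restriction of a clause: None represents 1 (satisfied, or tautological
  after simplification); Some D is the simplified clause.\<close>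
definition clause_restr :: "'v subst \<Rightarrow> 'v clause \<Rightarrow> 'v clause option" where
  "clause_restr \<sigma> C =
     (if Cst True \<in> slit \<sigma> ` C
         \<or> (\<exists>l. Lt l \<in> slit \<sigma> ` C \<and> Lt (neg_lit l) \<in> slit \<sigma> ` C)
      then None
      else Some {l. Lt l \<in> slit \<sigma> ` C})"

definition models :: "'v subst \<Rightarrow> 'v clause \<Rightarrow> bool" where
  "models \<sigma> C \<longleftrightarrow> clause_restr \<sigma> C = None"

definition models_cnf :: "'v subst \<Rightarrow> 'v cnf \<Rightarrow> bool" where
  "models_cnf \<sigma> \<Gamma> \<longleftrightarrow> (\<forall>C\<in>#\<Gamma>. models \<sigma> C)"

definition cnf_restr :: "'v subst \<Rightarrow> 'v cnf \<Rightarrow> 'v cnf" where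
  "cnf_restr \<sigma> \<Gamma> =
     image_mset (\<lambda>C. the (clause_restr \<sigma> C)) (filter_mset (\<lambda>C. \<not> models \<sigma> C) \<Gamma>)"

text \<open>The partial assignment falsifying all literals of C (C non-tautological).\<close>
definition neg_clause :: "'v clause \<Rightarrow> 'v subst" where
  "neg_clause C = (\<lambda>x. if Pos x \<in> C then Cst False
                        else if Neg x \<in> C then Cst True else Lt (Pos x))"

definition unit_asg :: "'v lit \<Rightarrow> 'v subst" where
  "unit_asg l = neg_clause {neg_lit l}"

inductive up_refutes :: "'v cnf \<Rightarrow> bool" where
  empty: "{} \<in># F \<Longrightarrow> up_refutes F"
| unit: "{l} \<in># F \<Longrightarrow> up_refutes (cnf_restr (unit_asg l) F) \<Longrightarrow> up_refutes F"

definition implies1 :: "'v cnf \<Rightarrow> 'v clause \<Rightarrow> bool" where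
  "implies1 \<Gamma> C \<longleftrightarrow> up_refutes (cnf_restr (neg_clause C) \<Gamma>)"

definition implies1_cnf :: "'v cnf \<Rightarrow> 'v cnf \<Rightarrow> bool" where
  "implies1_cnf \<Gamma> \<Delta> \<longleftrightarrow> (\<forall>D\<in>#\<Delta>. implies1 \<Gamma> D)"

definition maxsat_instance ::
  "'v cnf \<Rightarrow> (nat \<Rightarrow> 'v clause) \<Rightarrow> (nat \<Rightarrow> 'v) \<Rightarrow> nat \<Rightarrow> 'v cnf \<Rightarrow> bool" where
  "maxsat_instance H Cs b m \<Gamma> \<longleftrightarrow>
     \<Gamma> = H + mset (map (\<lambda>i. insert (Pos (b i)) (Cs i)) [1..<m+1])
     \<and> (\<forall>C\<in>#H. finite C) \<and> (\<forall>i\<in>{1..m}. finite (Cs i))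
     \<and> inj_on b {1..m}
     \<and> (\<forall>i\<in>{1..m}. b i \<notin> vars_cnf H \<and> (\<forall>j\<in>{1..m}. b i \<notin> vars (Cs j)))"

definition cost :: "(nat \<Rightarrow> 'v) \<Rightarrow> nat \<Rightarrow> 'v subst \<Rightarrow> nat" where
  "cost b m \<alpha> = (\<Sum>i=1..m. if \<alpha> (b i) = Cst True then 1 else 0)"

definition cnf_cost :: "(nat \<Rightarrow> 'v) \<Rightarrow> nat \<Rightarrow> 'v cnf \<Rightarrow> nat" where
  "cnf_cost b m \<Gamma> = Min {cost b m \<alpha> | \<alpha>. total \<alpha> \<and> models_cnf \<alpha> \<Gamma>}"

definition cost_sr_via :: "(nat \<Rightarrow> 'v) \<Rightarrow> nat \<Rightarrow> 'v cnf \<Rightarrow> 'v clause \<Rightarrow> 'v subst \<Rightarrow> bool" where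
  "cost_sr_via b m \<Gamma> C \<sigma> \<longleftrightarrow>
     \<not> tautological C
     \<and> implies1_cnf (cnf_restr (neg_clause C) \<Gamma>) (cnf_restr \<sigma> (add_mset C \<Gamma>))
     \<and> (\<forall>\<tau>. total \<tau> \<and> extends \<tau> (neg_clause C) \<longrightarrow> cost b m (scomp \<tau> \<sigma>) \<le> cost b m \<tau>)"

definition cost_spr :: "(nat \<Rightarrow> 'v) \<Rightarrow> nat \<Rightarrow> 'v cnf \<Rightarrow> 'v clause \<Rightarrow> bool" where
  "cost_spr b m \<Gamma> C \<longleftrightarrow>
     (\<exists>\<sigma>. is_pa \<sigma> \<and> sdom \<sigma> = sdom (neg_clause C) \<and> cost_sr_via b m \<Gamma> C \<sigma>)"

definition resolvent :: "'v clause \<Rightarrow> 'v clause \<Rightarrow> 'v clause \<Rightarrow> bool" where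
  "resolvent C1 C2 D \<longleftrightarrow>
     (\<exists>x. Pos x \<in> C1 \<and> Neg x \<in> C2 \<and> D = (C1 - {Pos x}) \<union> (C2 - {Neg x}))"

definition deriv_step ::
  "(nat \<Rightarrow> 'v) \<Rightarrow> nat \<Rightarrow> 'v cnf \<Rightarrow> 'v clause list \<Rightarrow> 'v clause \<Rightarrow> bool" where
  "deriv_step b m \<Gamma> prev D \<longleftrightarrow>
     D \<in># \<Gamma>
     \<or> (finite D \<and> (\<exists>D'\<in>set prev. D' \<subseteq> D))
     \<or> (\<exists>C1\<in>set prev. \<exists>C2\<in>set prev. resolvent C1 C2 D)
     \<or> (cost_spr b m (\<Gamma> + mset prev) D \<and> vars D \<subseteq> vars_cnf \<Gamma>)"

definition cost_spr_derivation ::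
  "(nat \<Rightarrow> 'v) \<Rightarrow> nat \<Rightarrow> 'v cnf \<Rightarrow> 'v clause list \<Rightarrow> bool" where
  "cost_spr_derivation b m \<Gamma> ds \<longleftrightarrow>
     (\<forall>i<length ds. deriv_step b m \<Gamma> (take i ds) (ds ! i))"

end

theory Submission
  imports Defs
begin

fun litval :: "('v \<Rightarrow> bool) \<Rightarrow> 'v lit \<Rightarrow> bool" where
  "litval \<beta> (Pos x) = \<beta> x"
| "litval \<beta> (Neg x) = (\<not> \<beta> x)"

definition lits :: "'v set \<Rightarrow> ('v \<Rightarrow> bool) \<Rightarrow> 'v clause" where
  "lits A \<beta> = {l. lvar l \<in> A \<and> \<not> litval \<beta> l}"

inductive rderiv :: "'v clause set \<Rightarrow> 'v clause \<Rightarrow> bool" for S where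
  base: "D \<in> S \<Longrightarrow> rderiv S D"
| res: "rderiv S C1 \<Longrightarrow> rderiv S C2 \<Longrightarrow> resolvent C1 C2 D \<Longrightarrow> rderiv S D"

lemma mem_plus_map: "x \<in> f ` set xs \<Longrightarrow> x \<in># H + mset (map f xs)"
  by (simp add: image_iff)

lemma valid_snoc:
  "cost_spr_derivation b m \<Gamma> (ds @ [D]) \<longleftrightarrow>
     cost_spr_derivation b m \<Gamma> ds \<and> deriv_step b m \<Gamma> ds D"
  unfolding cost_spr_derivation_def
  by (auto simp: nth_append less_Suc_eq)

lemma rderiv_extend:
  assumes "rderiv S D"
  shows "\<And>ds. cost_spr_derivation b m \<Gamma> ds \<Longrightarrow> S \<subseteq> set ds \<Longrightarrow>
    \<exists>ds'. cost_spr_derivation b m \<Gamma> (ds @ ds') \<and> D \<in> set (ds @ ds')"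
  using assms
proof (induction rule: rderiv.induct)
  case (base D)
  then show ?case by (intro exI[of _ "[]"]) auto
next
  case (res C1 C2 D)
  obtain ds1 where d1: "cost_spr_derivation b m \<Gamma> (ds @ ds1)" "C1 \<in> set (ds @ ds1)"
    using res by blast
  obtain ds2 where d2: "cost_spr_derivation b m \<Gamma> (ds @ ds1 @ ds2)" "C2 \<in> set (ds @ ds1 @ ds2)"
    using res.IH(2)[of "ds @ ds1"] d1 res.prems by auto
  have "deriv_step b m \<Gamma> (ds @ ds1 @ ds2) D"
    unfolding deriv_step_def using d1(2) d2(2) res.hyps(3) by auto
  then have "cost_spr_derivation b m \<Gamma> (ds @ (ds1 @ ds2 @ [D]))"
    using d2(1) valid_snoc[of b m \<Gamma> "ds @ ds1 @ ds2" D] by simp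
  then show ?case by (intro exI[of _ "ds1 @ ds2 @ [D]"]) auto
qed

lemma rderiv_targets:
  assumes "finite T" "\<forall>D\<in>T. rderiv S D" "cost_spr_derivation b m \<Gamma> ds0" "S \<subseteq> set ds0"
  shows "\<exists>ds. cost_spr_derivation b m \<Gamma> ds \<and> T \<subseteq> set ds \<and> S \<subseteq> set ds"
  using assms
proof (induction T rule: finite_induct)
  case empty
  then show ?case by blast
next
  case (insert D T)
  then obtain ds where ds: "cost_spr_derivation b m \<Gamma> ds" "T \<subseteq> set ds" "S \<subseteq> set ds" by auto
  obtain ds' where "cost_spr_derivation b m \<Gamma> (ds @ ds')" "D \<in> set (ds @ ds')"
    using rderiv_extend[where S=S and D=D and ds=ds and b=b and m=m and \<Gamma>=\<Gamma>] ds insert.prems by auto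
  then show ?case using ds by (intro exI[of _ "ds @ ds'"]) auto
qed

lemma lits_res:
  assumes "y \<in> A" "x \<in> A" "x \<noteq> y" "\<beta> x \<noteq> a x"
    and P: "\<forall>\<beta>. (\<exists>x\<in>A. \<beta> x \<noteq> a x) \<longrightarrow> rderiv S (lits A \<beta>)"
  shows "rderiv S (lits (A - {y}) \<beta>)"
proof -
  let ?C1 = "lits A (\<beta>(y := False))" and ?C2 = "lits A (\<beta>(y := True))"
  have r1: "rderiv S ?C1" using P assms(2,3,4) by (metis fun_upd_other)
  have r2: "rderiv S ?C2" using P assms(2,3,4) by (metis fun_upd_other)
  have "resolvent ?C1 ?C2 (lits (A - {y}) \<beta>)"
    unfolding resolvent_def
  proof (intro exI[of _ y] conjI)
    show "Pos y \<in> ?C1" "Neg y \<in> ?C2" using assms(1) by (auto simp: lits_def)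
    show "lits (A - {y}) \<beta> = (?C1 - {Pos y}) \<union> (?C2 - {Neg y})"
    proof (intro set_eqI)
      fix l :: "'a lit"
      show "l \<in> lits (A - {y}) \<beta> \<longleftrightarrow> l \<in> (?C1 - {Pos y}) \<union> (?C2 - {Neg y})"
        by (cases l) (auto simp: lits_def)
    qed
  qed
  then show ?thesis using r1 r2 rderiv.res by blast
qed

lemma shrink:
  assumes "finite B" "x \<notin> B"
    and "\<forall>\<beta>. (\<exists>z\<in>insert x B. \<beta> z \<noteq> a z) \<longrightarrow> rderiv S (lits (insert x B) \<beta>)"
  shows "\<forall>\<beta>. (\<exists>z\<in>{x}. \<beta> z \<noteq> a z) \<longrightarrow> rderiv S (lits {x} \<beta>)"
  using assms
proof (induction B rule: finite_induct)
  case empty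
  then show ?case by simp
next
  case (insert y B)
  have "\<forall>\<beta>. (\<exists>z\<in>insert x B. \<beta> z \<noteq> a z) \<longrightarrow> rderiv S (lits (insert x B) \<beta>)"
  proof (intro allI impI)
    fix \<beta> assume "\<exists>z\<in>insert x B. \<beta> z \<noteq> a z"
    then obtain z where z: "z \<in> insert x B" "\<beta> z \<noteq> a z" by blast
    have "rderiv S (lits (insert x (insert y B) - {y}) \<beta>)"
      apply (rule lits_res[where x = z and a = a])
      using z insert.prems insert.hyps by auto
    moreover have "insert x (insert y B) - {y} = insert x B" using insert.hyps insert.prems by auto
    ultimately show "rderiv S (lits (insert x B) \<beta>)" by simp
  qed
  then show ?case using insert by auto
qed

theorem theorem4p3:
  fixes H :: "'v cnf" and Cs :: "nat \<Rightarrow> 'v clause" and b :: "nat \<Rightarrow> 'v"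
    and m k :: nat and \<Gamma> :: "'v cnf"
  assumes "maxsat_instance H Cs b m \<Gamma>"
    and "\<exists>\<alpha>. total \<alpha> \<and> models_cnf \<alpha> \<Gamma>"
    and "cnf_cost b m \<Gamma> = k"
  shows "\<exists>ds I. cost_spr_derivation b m \<Gamma> ds \<and> I \<subseteq> {1..m} \<and> card I = k
           \<and> (\<forall>i\<in>I. {Pos (b i)} \<in> set ds)
           \<and> (\<forall>j\<in>{1..m} - I. {Neg (b j)} \<in> set ds)"
proof -
  let ?V = "vars_cnf \<Gamma>"
  have \<Gamma>def: "\<Gamma> = H + mset (map (\<lambda>i. insert (Pos (b i)) (Cs i)) [1..<m+1])"
    and finH: "\<forall>C\<in>#H. finite C" and finCs: "\<forall>i\<in>{1..m}. finite (Cs i)"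
    using assms(1) unfolding maxsat_instance_def by auto
  have finCl: "finite G" if "G \<in># \<Gamma>" for G
    using that finH finCs \<Gamma>def by auto
  have finV: "finite ?V"
    unfolding vars_cnf_def vars_def using finCl by auto
  have bV: "b i \<in> ?V" if "i \<in> {1..m}" for i
  proof -
    have "insert (Pos (b i)) (Cs i) \<in> (\<lambda>i. insert (Pos (b i)) (Cs i)) ` set [1..<m+1]"
      using that by (intro imageI) auto
    then have "insert (Pos (b i)) (Cs i) \<in># \<Gamma>" unfolding \<Gamma>def
      using mem_plus_map by metis
    then show ?thesis unfolding vars_cnf_def vars_def
      by (rule UN_I, intro image_eqI[of _ _ "Pos (b i)"]) auto
  qed
  have costle: "cost b m \<alpha> \<le> m" for \<alpha>
    unfolding cost_def using sum_bounded_above[of "{1..m}" "\<lambda>i. if \<alpha> (b i) = Cst True then 1 else (0::nat)" 1]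
    by auto
  let ?CS = "{cost b m \<alpha> | \<alpha>. total \<alpha> \<and> models_cnf \<alpha> \<Gamma>}"
  have finCS: "finite ?CS" by (rule finite_subset[of _ "{..m}"]) (auto simp: costle)
  have neCS: "?CS \<noteq> {}" using assms(2) by auto
  have "k \<in> ?CS" using Min_in[OF finCS neCS] assms(3) unfolding cnf_cost_def by simp
  then obtain \<alpha> where \<alpha>: "total \<alpha>" "models_cnf \<alpha> \<Gamma>" "cost b m \<alpha> = k" by auto
  have kmin: "k \<le> cost b m \<alpha>'" if "total \<alpha>'" "models_cnf \<alpha>' \<Gamma>" for \<alpha>'
    using Min_le[OF finCS] that assms(3) unfolding cnf_cost_def by blast
  define a where "a x = (\<alpha> x = Cst True)" for x
  have \<alpha>a: "\<alpha> x = Cst (a x)" for x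
    using \<alpha>(1) unfolding total_def a_def by (metis (full_types) sval.inject(1))
  have slit_cst: "slit (\<lambda>x. Cst (\<beta> x)) l = Cst (litval \<beta> l)" for \<beta> l
    by (cases l) auto
  have \<alpha>sat: "\<exists>l\<in>G. litval a l" if "G \<in># \<Gamma>" for G
  proof -
    have eq: "\<alpha> = (\<lambda>x. Cst (a x))" using \<alpha>a by auto
    have "clause_restr \<alpha> G = None" using \<alpha>(2) that unfolding models_cnf_def models_def by auto
    then have "Cst True \<in> slit \<alpha> ` G \<or> (\<exists>l. Lt l \<in> slit \<alpha> ` G \<and> Lt (neg_lit l) \<in> slit \<alpha> ` G)"
      unfolding clause_restr_def by (auto split: if_splits)
    then show ?thesis unfolding eq slit_cst by auto
  qed
  have litV: "lvar l \<in> ?V" if "G \<in># \<Gamma>" "l \<in> G" for G l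
    using that unfolding vars_cnf_def vars_def by auto
  define \<sigma> where "\<sigma> x = (if x \<in> ?V then Cst (a x) else Lt (Pos x))" for x
  have slit\<sigma>: "slit \<sigma> l = Cst (litval a l)" if "lvar l \<in> ?V" for l
    using that by (cases l) (auto simp: \<sigma>_def)
  have models\<sigma>: "models \<sigma> G" if "\<exists>l\<in>G. lvar l \<in> ?V \<and> litval a l" for G
  proof -
    from that obtain l where "l \<in> G" "lvar l \<in> ?V" "litval a l" by blast
    then have "Cst True \<in> slit \<sigma> ` G" using slit\<sigma> by force
    then show ?thesis unfolding models_def clause_restr_def by auto
  qed
  define FC where "FC = (\<lambda>\<beta>. lits ?V \<beta>) ` {\<beta>. \<exists>x\<in>?V. \<beta> x \<noteq> a x}"
  have finlits: "finite (lits A \<beta>)" if "finite A" for A and \<beta> :: "'v \<Rightarrow> bool"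
  proof (rule finite_subset[of _ "Pos ` A \<union> Neg ` A"])
    show "lits A \<beta> \<subseteq> Pos ` A \<union> Neg ` A"
    proof
      fix l assume "l \<in> lits A \<beta>" then show "l \<in> Pos ` A \<union> Neg ` A"
        by (cases l) (auto simp: lits_def)
    qed
  qed (use that in auto)
  have finFC: "finite FC"
  proof (rule finite_subset[of _ "Pow (Pos ` ?V \<union> Neg ` ?V)"])
    show "FC \<subseteq> Pow (Pos ` ?V \<union> Neg ` ?V)"
    proof
      fix D assume "D \<in> FC"
      then obtain \<beta> where "D = lits ?V \<beta>" unfolding FC_def by auto
      then show "D \<in> Pow (Pos ` ?V \<union> Neg ` ?V)"
        apply auto
        subgoal for l by (cases l) (auto simp: lits_def)
        done
    qed
  qed (simp add: finV)
  obtain gl0 where gl0: "mset gl0 = \<Gamma>" using ex_mset by metis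
  define gl where "gl = gl0"
  have gl: "set gl = set_mset \<Gamma>" unfolding gl_def using gl0 by (metis set_mset_mset)
  define fl where "fl = (SOME xs. set xs = FC)"
  have fl: "set fl = FC" unfolding fl_def by (rule someI_ex, rule finite_list[OF finFC])
  have step: "deriv_step b m \<Gamma> prev D"
    if D: "D \<in> FC" and pv1: "set prev \<subseteq> set_mset \<Gamma> \<union> FC" and pv2: "set_mset \<Gamma> \<subseteq> set prev"
    for prev D
  proof -
    obtain \<beta> where D\<beta>: "D = lits ?V \<beta>" and dis: "\<exists>x\<in>?V. \<beta> x \<noteq> a x"
      using D unfolding FC_def by auto
    show ?thesis
    proof (cases "\<exists>G\<in>#\<Gamma>. G \<subseteq> D")
      case True
      then show ?thesis unfolding deriv_step_def using pv2 finlits[OF finV] D\<beta> by blast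
    next
      case False
      define t\<beta> where "t\<beta> = (\<lambda>x. Cst (\<beta> x) :: 'v sval)"
      have tt: "total t\<beta>" unfolding total_def is_pa_def t\<beta>_def by auto
      have tm: "models_cnf t\<beta> \<Gamma>"
        unfolding models_cnf_def
      proof
        fix G assume G: "G \<in># \<Gamma>"
        then obtain l where l: "l \<in> G" "l \<notin> D" using False by blast
        then have "litval \<beta> l" using litV[OF G l(1)] D\<beta> by (auto simp: lits_def)
        then have "Cst True \<in> slit t\<beta> ` G" using l(1) unfolding t\<beta>_def slit_cst by force
        then show "models t\<beta> G" unfolding models_def clause_restr_def by auto
      qed
      have kb: "k \<le> cost b m t\<beta>" using kmin tt tm by blast
      have memD: "l \<in> D \<longleftrightarrow> lvar l \<in> ?V \<and> \<not> litval \<beta> l" for l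
        using D\<beta> by (simp add: lits_def)
      have ncD: "neg_clause D x = (if x \<in> ?V then Cst (\<beta> x) else Lt (Pos x))" for x
        using memD[of "Pos x"] memD[of "Neg x"] by (auto simp: neg_clause_def)
      have pa: "is_pa \<sigma>" unfolding is_pa_def \<sigma>_def by auto
      have dom: "sdom \<sigma> = sdom (neg_clause D)"
        unfolding sdom_def ncD \<sigma>_def by auto
      have ntaut: "\<not> tautological D"
        unfolding tautological_def using memD by fastforce
      have allm: "models \<sigma> G" if "G \<in># add_mset D (\<Gamma> + mset prev)" for G
      proof -
        have "G = D \<or> G \<in># \<Gamma> \<or> G \<in> FC" using that pv1 by auto
        moreover have "models \<sigma> G" if "G \<in># \<Gamma>"
          using \<alpha>sat[OF that] litV[OF that] models\<sigma> by blast
        moreover have "models \<sigma> G" if GFC: "G \<in> FC"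
        proof -
          obtain \<beta>' where "G = lits ?V \<beta>'" "\<exists>x\<in>?V. \<beta>' x \<noteq> a x" using GFC unfolding FC_def by auto
          then obtain x where x: "x \<in> ?V" "\<beta>' x \<noteq> a x" "G = lits ?V \<beta>'" by blast
          show ?thesis
          proof (cases "a x")
            case True
            then show ?thesis using x by (intro models\<sigma> bexI[of _ "Pos x"]) (auto simp: lits_def)
          next
            case False
            then show ?thesis using x by (intro models\<sigma> bexI[of _ "Neg x"]) (auto simp: lits_def)
          qed
        qed
        ultimately show ?thesis using D by blast
      qed
      have empty: "cnf_restr \<sigma> (add_mset D (\<Gamma> + mset prev)) = {#}"
        unfolding cnf_restr_def using allm by (simp add: filter_mset_eq_conv)
      have costc: "cost b m (scomp \<tau> \<sigma>) \<le> cost b m \<tau>"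
        if "total \<tau> \<and> extends \<tau> (neg_clause D)" for \<tau>
      proof -
        have "cost b m (scomp \<tau> \<sigma>) = cost b m \<alpha>"
          unfolding cost_def scomp_def
          by (rule sum.cong) (auto simp: \<sigma>_def bV \<alpha>a)
        moreover have "cost b m \<tau> = cost b m t\<beta>"
          unfolding cost_def
        proof (rule sum.cong)
          fix i assume i: "i \<in> {1..m}"
          have "\<tau> (b i) = Cst (\<beta> (b i))"
            using that ncD[of "b i"] bV[OF i] unfolding extends_def by auto
          then show "(if \<tau> (b i) = Cst True then 1 else 0) = (if t\<beta> (b i) = Cst True then 1 else (0::nat))"
            unfolding t\<beta>_def by simp
        qed simp
        ultimately show ?thesis using kb \<alpha>(3) by simp
      qed
      have "cost_spr b m (\<Gamma> + mset prev) D"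
        unfolding cost_spr_def cost_sr_via_def implies1_cnf_def
        using pa dom ntaut empty costc by auto
      moreover have "vars D \<subseteq> ?V" using memD unfolding vars_def by auto
      ultimately show ?thesis unfolding deriv_step_def by blast
    qed
  qed
  define ds0 where "ds0 = gl @ fl"
  have v0: "cost_spr_derivation b m \<Gamma> ds0"
    unfolding cost_spr_derivation_def
  proof (intro allI impI)
    fix i assume i: "i < length ds0"
    show "deriv_step b m \<Gamma> (take i ds0) (ds0 ! i)"
    proof (cases "i < length gl")
      case True
      then have "ds0 ! i \<in># \<Gamma>" unfolding ds0_def using gl by (metis nth_append nth_mem)
      then show ?thesis unfolding deriv_step_def by blast
    next
      case False
      then have e1: "ds0 ! i = fl ! (i - length gl)" and e2: "take i ds0 = gl @ take (i - length gl) fl"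
        unfolding ds0_def by (auto simp: nth_append)
      have "fl ! (i - length gl) \<in> FC" using i False fl unfolding ds0_def by auto
      moreover have "set (gl @ take (i - length gl) fl) \<subseteq> set_mset \<Gamma> \<union> FC"
        using gl fl set_take_subset[of "i - length gl" fl] by auto
      ultimately show ?thesis unfolding e1 e2 using step gl by auto
    qed
  qed
  have base: "\<forall>\<beta>. (\<exists>z\<in>?V. \<beta> z \<noteq> a z) \<longrightarrow> rderiv (set ds0) (lits ?V \<beta>)"
  proof (intro allI impI)
    fix \<beta> assume "\<exists>z\<in>?V. \<beta> z \<noteq> a z"
    then have "lits ?V \<beta> \<in> set ds0" using fl unfolding ds0_def FC_def by auto
    then show "rderiv (set ds0) (lits ?V \<beta>)" by (rule rderiv.base)
  qed
  have units: "rderiv (set ds0) (lits {x} (\<lambda>z. \<not> a z))" if x: "x \<in> ?V" for x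
  proof -
    have "insert x (?V - {x}) = ?V" using x by auto
    then have "\<forall>\<beta>. (\<exists>z\<in>{x}. \<beta> z \<noteq> a z) \<longrightarrow> rderiv (set ds0) (lits {x} \<beta>)"
      using shrink[of "?V - {x}" x a "set ds0"] finV base by auto
    then show ?thesis by auto
  qed
  define T where "T = (\<lambda>x. lits {x} (\<lambda>z. \<not> a z)) ` b ` {1..m}"
  obtain ds where ds: "cost_spr_derivation b m \<Gamma> ds" "T \<subseteq> set ds"
    using rderiv_targets[of T "set ds0" b m \<Gamma> ds0] v0 units bV unfolding T_def by auto
  define I where "I = {i\<in>{1..m}. a (b i)}"
  have lx: "lits {x} (\<lambda>z. \<not> a z) = (if a x then {Pos x} else {Neg x})" for x
  proof (intro set_eqI)
    fix l show "l \<in> lits {x} (\<lambda>z. \<not> a z) \<longleftrightarrow> l \<in> (if a x then {Pos x} else {Neg x})"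
      by (cases l) (auto simp: lits_def)
  qed
  have "card I = cost b m \<alpha>"
    unfolding I_def cost_def \<alpha>a by (simp add: sum.If_cases Int_def conj_commute)
  then have cI: "card I = k" using \<alpha>(3) by simp
  show ?thesis
  proof (intro exI[of _ ds] exI[of _ I] conjI)
    show "\<forall>i\<in>I. {Pos (b i)} \<in> set ds"
      using ds(2) lx unfolding T_def I_def by force
    show "\<forall>j\<in>{1..m} - I. {Neg (b j)} \<in> set ds"
      using ds(2) lx unfolding T_def I_def by force
  qed (use ds cI I_def in auto)
qed

end
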